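(* Let $s_{\mathrm{pub}}$ be a public state of a finite two-player zero-sum game with perfect recall, and let $\beta=(\beta_1,\beta_2)$ be a public belief state at $s_{\mathrm{pub}}$. Let $\pi^*$ be any Nash equilibrium of the subgame rooted at $\beta$. Then there exist a concave function $\tilde V_1:\mathbb{R}_{\ge 0}^{S_1(s_{\mathrm{pub}})}\to\mathbb{R}$ extending $V_1$ to unnormalized beliefs, i.e. with $\tilde V_1(x)=V_1\big((x,\beta_2)\big)$ for every probability distribution $x$ on $S_1(s_{\mathrm{pub}})$, and a supergradient $\bar g\in\mathbb{R}^{S_1(s_{\mathrm{pub}})}$ of $\tilde V_1$ at $\beta_1$ (that is, $\tilde V_1(y)\le \tilde V_1(\beta_1)+\bar g\cdot(y-\beta_1)$ for all $y\in\mathbb{R}_{\ge0}^{S_1(s_{\mathrm{pub}})}$), such that for every infostate $s_1\in S_1(s_{\mathrm{pub}})$, $$v_1^{\pi^*}(s_1\mid\beta)=V_1(\beta)+\bar g\cdot \hat s_1,$$ where $\hat s_1$ is the unit coordinate vector in direction $s_1$.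
   Context: Setting: a finite two-player zero-sum game (rewards satisfy $\mathcal R_1=-\mathcal R_2$) with perfect recall, described by world states, joint actions, a stochastic transition function, and for each player private and public observations. A history $h$ is a finite sequence of world states and joint actions; an infostate $s_i$ of player $i$ is the sequence of player $i$'s observations and own actions; $\mathcal H(s_i)$ is the set of histories consistent with $s_i$ and $s_i(h)$ is the infostate of player $i$ at $h$. A public state $s_{\mathrm{pub}}$ is a sequence of public observations; $\mathcal H(s_{\mathrm{pub}})$ is the set of histories consistent with it and $S_i(s_{\mathrm{pub}})$ the set of infostates of player $i$ consistent with it. A policy maps infostates to distributions over legal actions; $v_i^{\pi}(h)$ is the expected sum of future rewards of player $i$ from history $h$ when the profile $\pi$ is played. A public belief state (PBS) at $s_{\mathrm{pub}}$ is $\beta=(\beta_1,\beta_2)$ with $\beta_i$ a probability distribution on $S_i(s_{\mathrm{pub}})$. It induces a distribution $p(\cdot\mid\beta)$ on $\mathcal H(s_{\mathrm{pub}})$ of the form $p(h\mid\beta)=\beta_1(s_1(h))\,p(h\mid s_1(h),\beta_2)$, where for each $s_1$, $p(\cdot\mid s_1,\beta_2)$ is a probability distribution on $\mathcal H(s_1)\cap\mathcal H(s_{\mathrm{pub}})$ determined only by $s_1$ and $\beta_2$. The subgame rooted at $\beta$ is the game in which a history $h$ is drawn from $p(\cdot\mid\beta)$ (each player learning only their own infostate) and play then continues as in the original game. For a profile $\pi$ of this subgame, $V_1^{\pi}(\beta)=\sum_{h\in\mathcal H(s_{\mathrm{pub}})}p(h\mid\beta)v_1^{\pi}(h)$, and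 $V_1(\beta)$ denotes the value of the subgame to player 1 (the common value $V_1^{\pi^*}(\beta)$ over Nash equilibria $\pi^*$ of the subgame). The infostate value is $$v_1^{\pi^*}(s_1\mid\beta)=\max_{\pi_1}\sum_{h\in\mathcal H(s_1)}p(h\mid s_1,\beta_2)\,v_1^{\langle\pi_1,\pi_2^*\rangle}(h).$$ *)

theory Defs
  imports "HOL-Analysis.Analysis"
begin

text \<open>
* The finite type 's1 is the set S_1(s_pub) of player-1 infostates consistent
   with s_pub; 's2 is S_2(s_pub); 'h is the set H(s_pub) of histories
   consistent with s_pub.  info1 h / info2 h are the infostates s_1(h), s_2(h).
 * cond s1 h is the conditional distribution p(h | s1, beta2) (beta2 is fixed
   throughout the statement, so it is folded into this kernel).
 * By perfect recall, all infostates a player can reach in the continuation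
   from a history h extend that player's infostate at h.  Hence a policy of
   player 1 in the subgame is a family, indexed by s1, of continuation policies
   after s1.  By Kuhn's theorem (perfect recall) behavioural policies are
   realization-equivalent to mixed strategies over finitely many pure
   continuation plans; P1 s1 (resp. P2 s2) is the finite nonempty set of pure
   continuation plans of player 1 after s1 (resp. player 2 after s2), and
   u h a b is the expected future reward of player 1 from history h when the
   plans a, b are played (player 2's reward is - u h a b: zero-sum).
\<close>

record ('s1, 's2, 'h, 'a, 'b) subgame =
  info1 :: "'h \<Rightarrow> 's1"
  info2 :: "'h \<Rightarrow> 's2"
  cond  :: "'s1 \<Rightarrow> 'h \<Rightarrow> real"
  P1    :: "'s1 \<Rightarrow> 'a set"
  P2    :: "'s2 \<Rightarrow> 'b set"
  u     :: "'h \<Rightarrow> 'a \<Rightarrow> 'b \<Rightarrow> real"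

definition wf_subgame ::
  "('s1::finite, 's2::finite, 'h::finite, 'a, 'b) subgame \<Rightarrow> bool" where
  "wf_subgame G \<longleftrightarrow>
     (\<forall>s. finite (P1 G s) \<and> P1 G s \<noteq> {}) \<and>
     (\<forall>s. finite (P2 G s) \<and> P2 G s \<noteq> {}) \<and>
     (\<forall>s h. 0 \<le> cond G s h) \<and>
     (\<forall>s. (\<Sum>h\<in>{h. info1 G h = s}. cond G s h) = 1)"

definition prob_vec :: "real ^ 's::finite \<Rightarrow> bool" where
  "prob_vec x \<longleftrightarrow> (\<forall>i. 0 \<le> x $ i) \<and> (\<Sum>i\<in>UNIV. x $ i) = 1"

definition nonneg_orthant :: "(real ^ 's::finite) set" where
  "nonneg_orthant = {x. \<forall>i. 0 \<le> x $ i}"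

definition pol1 :: "('s1::finite, 's2::finite, 'h::finite, 'a, 'b) subgame \<Rightarrow> ('s1 \<Rightarrow> 'a \<Rightarrow> real) set" where
  "pol1 G = {\<sigma>. \<forall>s. (\<forall>a\<in>P1 G s. 0 \<le> \<sigma> s a) \<and> (\<Sum>a\<in>P1 G s. \<sigma> s a) = 1}"

definition pol2 :: "('s1::finite, 's2::finite, 'h::finite, 'a, 'b) subgame \<Rightarrow> ('s2 \<Rightarrow> 'b \<Rightarrow> real) set" where
  "pol2 G = {\<sigma>. \<forall>s. (\<forall>b\<in>P2 G s. 0 \<le> \<sigma> s b) \<and> (\<Sum>b\<in>P2 G s. \<sigma> s b) = 1}"

definition hval :: "('s1::finite, 's2::finite, 'h::finite, 'a, 'b) subgame \<Rightarrow>
    ('s1 \<Rightarrow> 'a \<Rightarrow> real) \<Rightarrow> ('s2 \<Rightarrow> 'b \<Rightarrow> real) \<Rightarrow> 'h \<Rightarrow> real" where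
  "hval G \<sigma>1 \<sigma>2 h =
     (\<Sum>a\<in>P1 G (info1 G h). \<Sum>b\<in>P2 G (info2 G h).
        \<sigma>1 (info1 G h) a * \<sigma>2 (info2 G h) b * u G h a b)"

definition pbs_prob :: "('s1::finite, 's2::finite, 'h::finite, 'a, 'b) subgame \<Rightarrow> real ^ 's1 \<Rightarrow> 'h \<Rightarrow> real" where
  "pbs_prob G x h = x $ (info1 G h) * cond G (info1 G h) h"

definition Vpol :: "('s1::finite, 's2::finite, 'h::finite, 'a, 'b) subgame \<Rightarrow> real ^ 's1 \<Rightarrow>
    ('s1 \<Rightarrow> 'a \<Rightarrow> real) \<Rightarrow> ('s2 \<Rightarrow> 'b \<Rightarrow> real) \<Rightarrow> real" where
  "Vpol G x \<sigma>1 \<sigma>2 = (\<Sum>h\<in>UNIV. pbs_prob G x h * hval G \<sigma>1 \<sigma>2 h)"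

definition is_NE :: "('s1::finite, 's2::finite, 'h::finite, 'a, 'b) subgame \<Rightarrow> real ^ 's1 \<Rightarrow>
    ('s1 \<Rightarrow> 'a \<Rightarrow> real) \<Rightarrow> ('s2 \<Rightarrow> 'b \<Rightarrow> real) \<Rightarrow> bool" where
  "is_NE G x \<sigma>1 \<sigma>2 \<longleftrightarrow> \<sigma>1 \<in> pol1 G \<and> \<sigma>2 \<in> pol2 G \<and>
     (\<forall>\<tau>1\<in>pol1 G. Vpol G x \<tau>1 \<sigma>2 \<le> Vpol G x \<sigma>1 \<sigma>2) \<and>
     (\<forall>\<tau>2\<in>pol2 G. - Vpol G x \<sigma>1 \<tau>2 \<le> - Vpol G x \<sigma>1 \<sigma>2)"

text \<open>V_1((x, beta2)): the value of the zero-sum subgame to player 1 (min-max value;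
  it coincides with V_1^pi*((x,beta2)) for every Nash equilibrium pi*).\<close>
definition game_value :: "('s1::finite, 's2::finite, 'h::finite, 'a, 'b) subgame \<Rightarrow> real ^ 's1 \<Rightarrow> real" where
  "game_value G x = (INF \<sigma>2\<in>pol2 G. SUP \<sigma>1\<in>pol1 G. Vpol G x \<sigma>1 \<sigma>2)"

definition info_value :: "('s1::finite, 's2::finite, 'h::finite, 'a, 'b) subgame \<Rightarrow>
    ('s2 \<Rightarrow> 'b \<Rightarrow> real) \<Rightarrow> 's1 \<Rightarrow> real" where
  "info_value G \<sigma>2 s1 =
     (SUP \<sigma>1\<in>pol1 G. \<Sum>h\<in>{h. info1 G h = s1}. cond G s1 h * hval G \<sigma>1 \<sigma>2 h)"

end

theory Submission
  imports Defs
begin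

definition Fv :: "('s1::finite, 's2::finite, 'h::finite, 'a, 'b) subgame \<Rightarrow>
    ('s1 \<Rightarrow> 'a \<Rightarrow> real) \<Rightarrow> ('s2 \<Rightarrow> 'b \<Rightarrow> real) \<Rightarrow> 's1 \<Rightarrow> real" where
  "Fv G \<sigma> \<tau> s = (\<Sum>h\<in>{h. info1 G h = s}. cond G s h * hval G \<sigma> \<tau> h)"

definition Mb :: "('s1::finite, 's2::finite, 'h::finite, 'a, 'b) subgame \<Rightarrow> 'h \<Rightarrow> real" where
  "Mb G h = (\<Sum>a\<in>P1 G (info1 G h). \<Sum>b\<in>P2 G (info2 G h). \<bar>u G h a b\<bar>)"

definition Kb :: "('s1::finite, 's2::finite, 'h::finite, 'a, 'b) subgame \<Rightarrow> 's1 \<Rightarrow> real" where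
  "Kb G s = (\<Sum>h\<in>{h. info1 G h = s}. cond G s h * Mb G h)"

lemma iv_Fv: "info_value G \<tau> s = (SUP \<sigma>\<in>pol1 G. Fv G \<sigma> \<tau> s)"
  by (simp add: info_value_def Fv_def)

lemma hval_bound:
  assumes wf: "wf_subgame G" and s1: "\<sigma> \<in> pol1 G" and s2: "\<tau> \<in> pol2 G"
  shows "\<bar>hval G \<sigma> \<tau> h\<bar> \<le> Mb G h"
proof -
  let ?A = "P1 G (info1 G h)" and ?B = "P2 G (info2 G h)"
  have fA: "finite ?A" and fB: "finite ?B" using wf by (auto simp: wf_subgame_def)
  have a01: "0 \<le> \<sigma> (info1 G h) a \<and> \<sigma> (info1 G h) a \<le> 1" if "a \<in> ?A" for a
  proof -
    have nn: "\<forall>a\<in>?A. 0 \<le> \<sigma> (info1 G h) a" and su: "(\<Sum>a\<in>?A. \<sigma> (info1 G h) a) = 1"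
      using s1 by (auto simp: pol1_def)
    have "\<sigma> (info1 G h) a \<le> (\<Sum>a\<in>?A. \<sigma> (info1 G h) a)"
      by (rule member_le_sum) (use that nn fA in auto)
    then show ?thesis using nn su that by auto
  qed
  have b01: "0 \<le> \<tau> (info2 G h) b \<and> \<tau> (info2 G h) b \<le> 1" if "b \<in> ?B" for b
  proof -
    have nn: "\<forall>b\<in>?B. 0 \<le> \<tau> (info2 G h) b" and su: "(\<Sum>b\<in>?B. \<tau> (info2 G h) b) = 1"
      using s2 by (auto simp: pol2_def)
    have "\<tau> (info2 G h) b \<le> (\<Sum>b\<in>?B. \<tau> (info2 G h) b)"
      by (rule member_le_sum) (use that nn fB in auto)
    then show ?thesis using nn su that by auto
  qed
  have "\<bar>hval G \<sigma> \<tau> h\<bar> \<le> (\<Sum>a\<in>?A. \<bar>\<Sum>b\<in>?B. \<sigma> (info1 G h) a * \<tau> (info2 G h) b * u G h a b\<bar>)"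
    unfolding hval_def by (rule sum_abs)
  also have "\<dots> \<le> (\<Sum>a\<in>?A. \<Sum>b\<in>?B. \<bar>\<sigma> (info1 G h) a * \<tau> (info2 G h) b * u G h a b\<bar>)"
    by (rule sum_mono) (rule sum_abs)
  also have "\<dots> \<le> Mb G h"
    unfolding Mb_def
  proof (rule sum_mono, rule sum_mono)
    fix a b assume a: "a \<in> ?A" and b: "b \<in> ?B"
    have "\<bar>\<sigma> (info1 G h) a * \<tau> (info2 G h) b * u G h a b\<bar>
        = \<sigma> (info1 G h) a * \<tau> (info2 G h) b * \<bar>u G h a b\<bar>"
      using a01[OF a] b01[OF b] by (simp add: abs_mult)
    also have "\<dots> \<le> 1 * 1 * \<bar>u G h a b\<bar>"
      using a01[OF a] b01[OF b] by (intro mult_right_mono mult_mono) auto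
    finally show "\<bar>\<sigma> (info1 G h) a * \<tau> (info2 G h) b * u G h a b\<bar> \<le> \<bar>u G h a b\<bar>" by simp
  qed
  finally show ?thesis .
qed

lemma Fv_bound:
  assumes wf: "wf_subgame G" and s1: "\<sigma> \<in> pol1 G" and s2: "\<tau> \<in> pol2 G"
  shows "\<bar>Fv G \<sigma> \<tau> s\<bar> \<le> Kb G s"
proof -
  have c: "0 \<le> cond G s h" for h using wf by (auto simp: wf_subgame_def)
  have "\<bar>Fv G \<sigma> \<tau> s\<bar> \<le> (\<Sum>h\<in>{h. info1 G h = s}. \<bar>cond G s h * hval G \<sigma> \<tau> h\<bar>)"
    unfolding Fv_def by (rule sum_abs)
  also have "\<dots> \<le> Kb G s" unfolding Kb_def
    by (rule sum_mono) (use c hval_bound[OF wf s1 s2] in \<open>auto simp: abs_mult intro: mult_left_mono\<close>)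
  finally show ?thesis .
qed

lemma vpol_decomp:
  fixes G :: "('s1::finite, 's2::finite, 'h::finite, 'a, 'b) subgame"
  shows "Vpol G x \<sigma> \<tau> = (\<Sum>s\<in>UNIV. x $ s * Fv G \<sigma> \<tau> s)"
proof -
  have "Vpol G x \<sigma> \<tau> = (\<Sum>s\<in>UNIV. \<Sum>h\<in>{h. h \<in> UNIV \<and> info1 G h = s}. pbs_prob G x h * hval G \<sigma> \<tau> h)"
    unfolding Vpol_def by (rule sum.group[symmetric]) auto
  also have "\<dots> = (\<Sum>s\<in>UNIV. x $ s * Fv G \<sigma> \<tau> s)"
    unfolding Fv_def pbs_prob_def by (auto simp: sum_distrib_left mult.assoc intro!: sum.cong)
  finally show ?thesis .
qed

lemma Fv_local: "\<sigma>' s = \<sigma> s \<Longrightarrow> Fv G \<sigma>' \<tau> s = Fv G \<sigma> \<tau> s"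
  unfolding Fv_def hval_def by (auto intro!: sum.cong)

lemma Fv_bdd:
  assumes wf: "wf_subgame G" and s2: "\<tau> \<in> pol2 G"
  shows "bdd_above ((\<lambda>\<sigma>. Fv G \<sigma> \<tau> s) ` pol1 G)"
  using Fv_bound[OF wf _ s2] by (intro bdd_aboveI[of _ "Kb G s"]) (force simp: abs_le_iff)

lemma iv_upper:
  assumes wf: "wf_subgame G" and s2: "\<tau> \<in> pol2 G" and s: "\<sigma> \<in> pol1 G"
  shows "Fv G \<sigma> \<tau> s \<le> info_value G \<tau> s"
  unfolding iv_Fv by (rule cSUP_upper[OF s Fv_bdd[OF wf s2]])

lemma iv_bounds:
  assumes wf: "wf_subgame G" and s2: "\<tau> \<in> pol2 G" and s0: "\<sigma>0 \<in> pol1 G"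
  shows "- Kb G s \<le> info_value G \<tau> s \<and> info_value G \<tau> s \<le> Kb G s"
proof
  have "- Kb G s \<le> Fv G \<sigma>0 \<tau> s" using Fv_bound[OF wf s0 s2, of s] by auto
  also have "\<dots> \<le> info_value G \<tau> s" by (rule iv_upper[OF wf s2 s0])
  finally show "- Kb G s \<le> info_value G \<tau> s" .
  show "info_value G \<tau> s \<le> Kb G s"
    unfolding iv_Fv using s0 Fv_bound[OF wf _ s2, of _ s]
    by (intro cSUP_least) (auto simp: abs_le_iff)
qed

lemma S_eq:
  fixes G :: "('s1::finite, 's2::finite, 'h::finite, 'a, 'b) subgame"
  assumes wf: "wf_subgame G" and s2: "\<tau> \<in> pol2 G" and s0: "\<sigma>0 \<in> pol1 G"
    and x: "\<forall>i. 0 \<le> x $ i"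
  shows "(SUP \<sigma>\<in>pol1 G. Vpol G x \<sigma> \<tau>) = (\<Sum>s\<in>UNIV. x $ s * info_value G \<tau> s)"
proof (rule antisym)
  show "(SUP \<sigma>\<in>pol1 G. Vpol G x \<sigma> \<tau>) \<le> (\<Sum>s\<in>UNIV. x $ s * info_value G \<tau> s)"
    using s0 by (intro cSUP_least)
      (auto simp: vpol_decomp x intro!: sum_mono mult_left_mono iv_upper[OF wf s2])
  have bdd: "bdd_above ((\<lambda>\<sigma>. Vpol G x \<sigma> \<tau>) ` pol1 G)"
  proof (intro bdd_aboveI[of _ "\<Sum>s\<in>UNIV. x $ s * Kb G s"], clarify)
    fix \<sigma> assume "\<sigma> \<in> pol1 G"
    then show "Vpol G x \<sigma> \<tau> \<le> (\<Sum>s\<in>UNIV. x $ s * Kb G s)"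
      using Fv_bound[OF wf _ s2] x
      by (auto simp: vpol_decomp abs_le_iff intro!: sum_mono mult_left_mono)
  qed
  let ?c = "\<Sum>s\<in>UNIV. x $ s"
  have c0: "0 \<le> ?c" using x by (simp add: sum_nonneg)
  show "(\<Sum>s\<in>UNIV. x $ s * info_value G \<tau> s) \<le> (SUP \<sigma>\<in>pol1 G. Vpol G x \<sigma> \<tau>)"
  proof (rule field_le_epsilon)
    fix e :: real assume e: "0 < e"
    define \<epsilon> where "\<epsilon> = e / (?c + 1)"
    have ep: "0 < \<epsilon>" using e c0 by (simp add: \<epsilon>_def)
    have "\<forall>s. \<exists>\<sigma>. \<sigma> \<in> pol1 G \<and> info_value G \<tau> s - \<epsilon> < Fv G \<sigma> \<tau> s"
    proof
      fix s
      have "info_value G \<tau> s - \<epsilon> < (SUP \<sigma>\<in>pol1 G. Fv G \<sigma> \<tau> s)"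
        using ep by (simp add: iv_Fv)
      then show "\<exists>\<sigma>. \<sigma> \<in> pol1 G \<and> info_value G \<tau> s - \<epsilon> < Fv G \<sigma> \<tau> s"
        using less_cSUP_iff[of "pol1 G" "\<lambda>\<sigma>. Fv G \<sigma> \<tau> s", OF _ Fv_bdd[OF wf s2]] s0 by blast
    qed
    then obtain f where f: "\<And>s. f s \<in> pol1 G" "\<And>s. info_value G \<tau> s - \<epsilon> < Fv G (f s) \<tau> s"
      by metis
    define \<sigma>' where "\<sigma>' = (\<lambda>s. f s s)"
    have p: "\<sigma>' \<in> pol1 G" using f(1) by (auto simp: pol1_def \<sigma>'_def)
    have Fe: "Fv G \<sigma>' \<tau> s = Fv G (f s) \<tau> s" for s by (rule Fv_local) (simp add: \<sigma>'_def)
    have "(\<Sum>s\<in>UNIV. x $ s * info_value G \<tau> s) - \<epsilon> * ?c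
        = (\<Sum>s\<in>UNIV. x $ s * (info_value G \<tau> s - \<epsilon>))"
      by (simp add: algebra_simps sum_subtractf sum_distrib_left)
    also have "\<dots> \<le> Vpol G x \<sigma>' \<tau>"
      unfolding vpol_decomp Fe
      by (intro sum_mono mult_left_mono less_imp_le f(2) x[rule_format])
    also have "\<dots> \<le> (SUP \<sigma>\<in>pol1 G. Vpol G x \<sigma> \<tau>)" by (rule cSUP_upper[OF p bdd])
    finally have A: "(\<Sum>s\<in>UNIV. x $ s * info_value G \<tau> s) \<le> (SUP \<sigma>\<in>pol1 G. Vpol G x \<sigma> \<tau>) + \<epsilon> * ?c"
      by simp
    have "\<epsilon> * ?c \<le> e"
    proof -
      have "\<epsilon> * ?c \<le> \<epsilon> * (?c + 1)" using ep by simp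
      also have "\<dots> = e" using c0 by (simp add: \<epsilon>_def)
      finally show ?thesis .
    qed
    then show "(\<Sum>s\<in>UNIV. x $ s * info_value G \<tau> s) \<le> (SUP \<sigma>\<in>pol1 G. Vpol G x \<sigma> \<tau>) + e"
      using A by linarith
  qed
qed

lemma Vpol_le_L:
  fixes G :: "('s1::finite, 's2::finite, 'h::finite, 'a, 'b) subgame"
  assumes wf: "wf_subgame G" and s2: "\<tau> \<in> pol2 G" and s: "\<sigma> \<in> pol1 G"
    and x: "\<forall>i. 0 \<le> x $ i"
  shows "Vpol G x \<sigma> \<tau> \<le> (\<Sum>s\<in>UNIV. x $ s * info_value G \<tau> s)"
  unfolding vpol_decomp
  by (intro sum_mono mult_left_mono iv_upper[OF wf s2 s] x[rule_format])

theorem theorem1: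
  fixes G :: "('s1::finite, 's2::finite, 'h::finite, 'a, 'b) subgame"
    and \<beta>1 :: "real ^ 's1"
    and \<sigma>1 :: "'s1 \<Rightarrow> 'a \<Rightarrow> real" and \<sigma>2 :: "'s2 \<Rightarrow> 'b \<Rightarrow> real"
  assumes "wf_subgame G"
    and "prob_vec \<beta>1"
    and "is_NE G \<beta>1 \<sigma>1 \<sigma>2"
  shows "\<exists>(Vt :: real ^ 's1 \<Rightarrow> real) (g :: real ^ 's1).
           concave_on nonneg_orthant Vt \<and>
           (\<forall>x. prob_vec x \<longrightarrow> Vt x = game_value G x) \<and>
           (\<forall>y\<in>nonneg_orthant. Vt y \<le> Vt \<beta>1 + g \<bullet> (y - \<beta>1)) \<and>
           (\<forall>s1. info_value G \<sigma>2 s1 = game_value G \<beta>1 + g \<bullet> axis s1 1)"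
proof -
  note wf = assms(1)
  have s1: "\<sigma>1 \<in> pol1 G" and s2: "\<sigma>2 \<in> pol2 G"
    and br1: "\<And>\<tau>. \<tau> \<in> pol1 G \<Longrightarrow> Vpol G \<beta>1 \<tau> \<sigma>2 \<le> Vpol G \<beta>1 \<sigma>1 \<sigma>2"
    and br2: "\<And>\<tau>. \<tau> \<in> pol2 G \<Longrightarrow> Vpol G \<beta>1 \<sigma>1 \<sigma>2 \<le> Vpol G \<beta>1 \<sigma>1 \<tau>"
    using assms(3) by (auto simp: is_NE_def)
  have b0: "\<forall>i. 0 \<le> \<beta>1 $ i" and b1: "(\<Sum>i\<in>UNIV. \<beta>1 $ i) = 1"
    using assms(2) by (auto simp: prob_vec_def)
  define L where "L \<tau> x = (\<Sum>s\<in>UNIV. x $ s * info_value G \<tau> s)" for \<tau> and x :: "real ^ 's1"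
  have gvL: "game_value G x = (INF \<tau>\<in>pol2 G. L \<tau> x)" if x: "\<forall>i. 0 \<le> x $ i" for x
    unfolding game_value_def
    by (rule INF_cong[OF refl]) (simp add: S_eq[OF wf _ s1 x] L_def)
  have bddL: "bdd_below ((\<lambda>\<tau>. L \<tau> x) ` pol2 G)" if x: "\<forall>i. 0 \<le> x $ i" for x
  proof (intro bdd_belowI[of _ "\<Sum>s\<in>UNIV. x $ s * (- Kb G s)"], clarify)
    fix \<tau> assume t: "\<tau> \<in> pol2 G"
    show "(\<Sum>s\<in>UNIV. x $ s * (- Kb G s)) \<le> L \<tau> x"
      unfolding L_def
      by (intro sum_mono mult_left_mono x[rule_format] conjunct1[OF iv_bounds[OF wf t s1]])
  qed
  define W where "W = Vpol G \<beta>1 \<sigma>1 \<sigma>2"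
  have LW: "L \<sigma>2 \<beta>1 = W"
  proof (rule antisym)
    show "L \<sigma>2 \<beta>1 \<le> W"
      unfolding L_def W_def S_eq[OF wf s2 s1 b0, symmetric]
      using s1 br1 by (intro cSUP_least) auto
    show "W \<le> L \<sigma>2 \<beta>1" unfolding W_def L_def by (rule Vpol_le_L[OF wf s2 s1 b0])
  qed
  define V where "V = game_value G \<beta>1"
  have VW: "V = W"
  proof (rule antisym)
    show "V \<le> W" unfolding V_def gvL[OF b0] LW[symmetric]
      by (rule cINF_lower[OF bddL[OF b0] s2])
    show "W \<le> V" unfolding V_def gvL[OF b0] using s2
    proof (intro cINF_greatest)
      fix \<tau> assume t: "\<tau> \<in> pol2 G"
      show "W \<le> L \<tau> \<beta>1" unfolding W_def L_def
        using br2[OF t] Vpol_le_L[OF wf t s1 b0] by linarith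
    qed auto
  qed
  define Vt where "Vt x = game_value G x + V * (1 - (\<Sum>i\<in>UNIV. x $ i))" for x :: "real ^ 's1"
  define g :: "real ^ 's1" where "g = (\<chi> s. info_value G \<sigma>2 s - V)"
  have Llin: "L \<tau> (u *\<^sub>R x + v *\<^sub>R y) = u * L \<tau> x + v * L \<tau> y" for \<tau> u v x y
    unfolding L_def by (simp add: algebra_simps sum.distrib sum_distrib_left)
  have sumlin: "(\<Sum>i\<in>UNIV. (u *\<^sub>R x + v *\<^sub>R y) $ i) = u * (\<Sum>i\<in>UNIV. x $ i) + v * (\<Sum>i\<in>UNIV. y $ i)"
    for u v and x y :: "real ^ 's1"
    by (simp add: algebra_simps sum.distrib sum_distrib_left)
  have orth: "z \<in> nonneg_orthant \<longleftrightarrow> (\<forall>i. 0 \<le> z $ i)" for z :: "real ^ 's1"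
    by (simp add: nonneg_orthant_def)
  have conv: "convex (nonneg_orthant :: (real ^ 's1) set)"
    by (auto simp: convex_def orth)
  have concave: "concave_on nonneg_orthant Vt"
    unfolding concave_on_iff
  proof (intro conjI conv ballI allI impI)
    fix x y :: "real ^ 's1" and u v :: real
    assume x: "x \<in> nonneg_orthant" and y: "y \<in> nonneg_orthant" and u: "0 \<le> u" and v: "0 \<le> v"
      and uv: "u + v = 1"
    have x': "\<forall>i. 0 \<le> x $ i" and y': "\<forall>i. 0 \<le> y $ i" using x y by (auto simp: orth)
    have z': "\<forall>i. 0 \<le> (u *\<^sub>R x + v *\<^sub>R y) $ i" using x' y' u v by auto
    have "u * game_value G x + v * game_value G y \<le> game_value G (u *\<^sub>R x + v *\<^sub>R y)"
      unfolding gvL[OF z'] using s2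
    proof (intro cINF_greatest)
      fix \<tau> assume t: "\<tau> \<in> pol2 G"
      have "game_value G x \<le> L \<tau> x" unfolding gvL[OF x'] by (rule cINF_lower[OF bddL[OF x'] t])
      moreover have "game_value G y \<le> L \<tau> y" unfolding gvL[OF y'] by (rule cINF_lower[OF bddL[OF y'] t])
      ultimately show "u * game_value G x + v * game_value G y \<le> L \<tau> (u *\<^sub>R x + v *\<^sub>R y)"
        unfolding Llin using u v by (intro add_mono mult_left_mono) auto
    qed auto
    moreover have "V * (1 - (\<Sum>i\<in>UNIV. (u *\<^sub>R x + v *\<^sub>R y) $ i))
        = u * (V * (1 - (\<Sum>i\<in>UNIV. x $ i))) + v * (V * (1 - (\<Sum>i\<in>UNIV. y $ i)))"
      unfolding sumlin using uv by (simp add: algebra_simps) (metis add_diff_cancel_left' distrib_left mult.right_neutral)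
    ultimately show "u * Vt x + v * Vt y \<le> Vt (u *\<^sub>R x + v *\<^sub>R y)"
      unfolding Vt_def by (simp add: algebra_simps)
  qed
  have Vtb: "Vt \<beta>1 = V" by (simp add: Vt_def b1 V_def)
  have super: "Vt y \<le> Vt \<beta>1 + g \<bullet> (y - \<beta>1)" if y: "y \<in> nonneg_orthant" for y
  proof -
    have y': "\<forall>i. 0 \<le> y $ i" using y by (auto simp: orth)
    have "game_value G y \<le> L \<sigma>2 y" unfolding gvL[OF y'] by (rule cINF_lower[OF bddL[OF y'] s2])
    moreover have "g \<bullet> (y - \<beta>1) = L \<sigma>2 y - L \<sigma>2 \<beta>1 - V * (\<Sum>i\<in>UNIV. y $ i) + V * (\<Sum>i\<in>UNIV. \<beta>1 $ i)"
      unfolding g_def inner_vec_def L_def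
      by (simp add: algebra_simps sum.distrib sum_subtractf sum_distrib_left)
    ultimately show ?thesis unfolding Vtb using LW VW b1 by (simp add: Vt_def algebra_simps)
  qed
  have last: "info_value G \<sigma>2 s = game_value G \<beta>1 + g \<bullet> axis s 1" for s
    by (simp add: inner_axis g_def V_def)
  show ?thesis
    apply (rule exI[of _ Vt], rule exI[of _ g])
    using concave super last by (auto simp: Vt_def prob_vec_def)
qed

end
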